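(* Let $n\in\mathbb N$, let $K_1,\dots,K_n$ be singular kernel functions and let $J$ be an arbitrary $n$-field function. Let $j\in\{0,1,\dots,n\}$. For every $q>0$ and every $\mathbf y\in\overline S$ with $m_j(\mathbf y)\ne-\infty$ there exist $\eta>0$ and a set $Z\subseteq I_j(\mathbf y)$ such that for every $\mathbf x\in\overline S$ with $\|\mathbf x-\mathbf y\|\le\eta$: (i) $Z\subseteq I_j(\mathbf x)$, and every point of $Z$ has distance at least $\eta$ from $\{x_1,\dots,x_n\}$; (ii) $m_j(\mathbf x)=\sup_{t\in Z}F(\mathbf x,t)$; (iii) $F(\mathbf x,t)\ge m_j(\mathbf x)-q>-\infty$ for every $t\in Z$.
   Context: A kernel function is a function $K:(-1,0)\cup(0,1)\to\mathbb R$ that is concave on $(-1,0)$ and concave on $(0,1)$ and satisfies $\lim_{t\downarrow0}K(t)=\lim_{t\uparrow0}K(t)$. It is extended to $[-1,1]$ with values in $[-\infty,\infty)$ by its one-sided limits at $-1,0,1$. A kernel function is singular if $K(0)=-\infty$. An $n$-field function is a function $J:[0,1]\to[-\infty,\infty)$ that is bounded above and whose set of finite values has total weight strictly greater than $n$. Here the points $0$ and $1$ each have weight $1/2$ and every point of $(0,1)$ has weight $1$. $\overline S=\{\mathbf y\in\mathbb R^n:0\le y_1\le\dots\le y_n\le1\}$. $F(\mathbf y,t)=J(t)+\sum_{i=1}^nK_i(t-y_i)$, with the convention $a+(-\infty)=-\infty$. Set $y_0:=0$ and $y_{n+1}:=1$. For $j=0,\dots,n$ let $I_j(\mathbf y)=[y_j,y_{j+1}]$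 and $m_j(\mathbf y)=\sup_{t\in I_j(\mathbf y)}F(\mathbf y,t)$. $\|\mathbf v\|=\max_i|v_i|$. *)

theory Defs
  imports "HOL-Analysis.Analysis"
begin

text \<open>A kernel function, given directly as its extension K :: real => ereal to [-1,1]
  (values outside [-1,1] are irrelevant).\<close>
definition kernel_function :: "(real \<Rightarrow> ereal) \<Rightarrow> bool" where
  "kernel_function K \<longleftrightarrow>
     (\<forall>t \<in> {-1<..<0} \<union> {0<..<1}. \<bar>K t\<bar> \<noteq> \<infinity>) \<and>
     concave_on {-1<..<0} (\<lambda>t. real_of_ereal (K t)) \<and>
     concave_on {0<..<1} (\<lambda>t. real_of_ereal (K t)) \<and>
     (K \<longlongrightarrow> K 0) (at_left 0) \<and>
     (K \<longlongrightarrow> K 0) (at_right 0) \<and>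
     (K \<longlongrightarrow> K (-1)) (at_right (-1)) \<and>
     (K \<longlongrightarrow> K 1) (at_left 1)"

definition singular_kernel :: "(real \<Rightarrow> ereal) \<Rightarrow> bool" where
  "singular_kernel K \<longleftrightarrow> kernel_function K \<and> K 0 = -\<infinity>"

definition pt_weight :: "real \<Rightarrow> real" where
  "pt_weight t = (if t = 0 \<or> t = 1 then 1/2 else 1)"

definition n_field_function :: "nat \<Rightarrow> (real \<Rightarrow> ereal) \<Rightarrow> bool" where
  "n_field_function n J \<longleftrightarrow>
     (\<exists>M::real. \<forall>t\<in>{0..1}. J t \<le> ereal M) \<and>
     (let D = {t\<in>{0..1}. J t \<noteq> -\<infinity>} in
        infinite D \<or> (\<Sum>t\<in>D. pt_weight t) > real n)"

text \<open>Points y in R^n are functions nat => real, only indices 1..n matter;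
  yext adds y_0 = 0 and y_(n+1) = 1.\<close>
definition yext :: "nat \<Rightarrow> (nat \<Rightarrow> real) \<Rightarrow> nat \<Rightarrow> real" where
  "yext n y i = (if i = 0 then 0 else if i = Suc n then 1 else y i)"

definition Sbar :: "nat \<Rightarrow> (nat \<Rightarrow> real) set" where
  "Sbar n = {y. \<forall>i\<le>n. yext n y i \<le> yext n y (Suc i)}"

definition Fval :: "nat \<Rightarrow> (real \<Rightarrow> ereal) \<Rightarrow> (nat \<Rightarrow> real \<Rightarrow> ereal) \<Rightarrow> (nat \<Rightarrow> real) \<Rightarrow> real \<Rightarrow> ereal" where
  "Fval n J K y t = J t + (\<Sum>i=1..n. K i (t - y i))"

definition Iint :: "nat \<Rightarrow> (nat \<Rightarrow> real) \<Rightarrow> nat \<Rightarrow> real set" where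
  "Iint n y j = {yext n y j .. yext n y (Suc j)}"

definition mval :: "nat \<Rightarrow> (real \<Rightarrow> ereal) \<Rightarrow> (nat \<Rightarrow> real \<Rightarrow> ereal) \<Rightarrow> (nat \<Rightarrow> real) \<Rightarrow> nat \<Rightarrow> ereal" where
  "mval n J K y j = (SUP t\<in>Iint n y j. Fval n J K y t)"

end

theory Submission
  imports Defs
begin


lemma concave_bound_aux:
  fixes f :: "real \<Rightarrow> real"
  assumes "concave_on S f" "a \<in> S" "t \<in> S" "a \<noteq> t"
    and u: "u = (b - a) / (t - a)" "0 \<le> u" "u \<le> 1"
  shows "f b \<ge> (1 - u) * f a + u * f t"
proof -
  have "(1 - u) *\<^sub>R a + u *\<^sub>R t = b"
    using u assms(4) by (simp add: field_simps)
  then show ?thesis using concave_onD[OF assms(1) u(2,3) assms(2,3)] by simp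
qed

lemma aux_abs: assumes "0 \<le> u" "u \<le> (1::real)" shows "(1-u) * c \<ge> - \<bar>c\<bar>"
proof (cases "c \<ge> 0")
  case True
  then have "(1-u) * c \<ge> 0" using assms by simp
  then show ?thesis using True by simp
next
  case False
  then have "u * c \<le> 0" using assms by (simp add: mult_nonneg_nonpos)
  then show ?thesis using False by (simp add: algebra_simps)
qed
lemma kf_fin:
  assumes "kernel_function K" "s \<in> {-1<..<0} \<union> {0<..<1}"
  shows "\<bar>K s\<bar> \<noteq> \<infinity>"
proof -
  have "\<forall>t \<in> {-1<..<0} \<union> {0<..<1}. \<bar>K t\<bar> \<noteq> \<infinity>"
    using assms(1) unfolding kernel_function_def by (rule conjunct1)
  then show ?thesis using assms(2) by (rule bspec)
qed

lemma kf_real: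
  assumes "kernel_function K" "s \<in> {-1<..<0} \<union> {0<..<1}"
  shows "ereal (real_of_ereal (K s)) = K s"
  using kf_fin[OF assms] by (rule ereal_real')

lemma kf_cont_open_aux:
  assumes kf: "kernel_function K" and S: "S = {-1<..<0} \<or> S = {0<..<1}" and s: "s \<in> S"
  shows "(K \<longlongrightarrow> K s) (at s)"
proof -
  let ?f = "\<lambda>t. real_of_ereal (K t)"
  have c1: "concave_on {-1<..<0} ?f" and c2: "concave_on {0<..<1} ?f"
    using kf unfolding kernel_function_def by (blast, blast)
  have conc: "concave_on S ?f" using S c1 c2 by (elim disjE) simp_all
  have op: "open S" using S by (elim disjE) simp_all
  have sub: "S \<subseteq> {-1<..<0} \<union> {0<..<1}" using S by (elim disjE) simp_all
  have "convex_on S (\<lambda>t. - ?f t)" using conc unfolding concave_on_def .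
  then have "continuous_on S (\<lambda>t. - ?f t)" by (rule convex_on_continuous[OF op])
  then have "continuous_on S (\<lambda>t. - (- ?f t))" by (rule continuous_on_minus)
  then have cont: "continuous_on S ?f" by simp
  have "isCont ?f s" using cont op s by (simp add: continuous_on_eq_continuous_at)
  then have "(?f \<longlongrightarrow> ?f s) (at s)" by (simp add: isCont_def)
  then have lim: "((\<lambda>t. ereal (?f t)) \<longlongrightarrow> ereal (?f s)) (at s)" by (rule tendsto_ereal)
  have eq: "ereal (?f t) = K t" if "t \<in> S" for t
    using kf_real[OF kf] sub that by blast
  have "(K \<longlongrightarrow> ereal (?f s)) (at s)"
    by (rule Lim_transform_within_open[OF lim op s]) (rule eq)
  then show ?thesis using eq[OF s] by simp
qed

lemma kf_cont_open:
  assumes "kernel_function K" "s \<in> {-1<..<0} \<union> {0<..<1}"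
  shows "(K \<longlongrightarrow> K s) (at s)"
  using assms kf_cont_open_aux by blast

lemma kf_one:
  assumes "kernel_function K"
  shows "K 1 \<noteq> \<infinity>"
proof
  assume inf: "K 1 = \<infinity>"
  let ?f = "\<lambda>t. real_of_ereal (K t)"
  define C where "C = \<bar>?f (1/2)\<bar> + \<bar>?f (1/4)\<bar>"
  have lim: "(K \<longlongrightarrow> \<infinity>) (at_left 1)" using assms inf unfolding kernel_function_def by auto
  have "eventually (\<lambda>t. ereal (4*C) < K t) (at_left 1)"
    using order_tendstoD(1)[OF lim] by simp
  then obtain b where b: "b < 1" "\<And>y. y > b \<Longrightarrow> y < 1 \<Longrightarrow> ereal (4*C) < K y"
    unfolding eventually_at_left_field by blast
  define t where "t = (max b (1/2) + 1)/2"
  have t: "t > b" "t < 1" "t > 1/2" using b unfolding t_def by auto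
  have conc: "concave_on {0<..<1} ?f" using assms unfolding kernel_function_def by auto
  define u where "u = (1/2 - 1/4) / (t - 1/4)"
  have u: "0 \<le> u" "u \<le> 1" using t unfolding u_def by (auto simp: field_simps)
  have "?f (1/2) \<ge> (1 - u) * ?f (1/4) + u * ?f t"
    by (rule concave_bound_aux[OF conc _ _ _ u_def u]) (use t in auto)
  moreover have "u \<ge> 1/4" using t unfolding u_def by (auto simp: field_simps)
  moreover have "(1 - u) * ?f (1/4) \<ge> - \<bar>?f (1/4)\<bar>"
    using aux_abs[OF u] by blast
  ultimately have "u * ?f t \<le> C" unfolding C_def by linarith
  have "?f t \<le> 4 * C"
  proof (rule ccontr)
    assume "\<not> ?f t \<le> 4 * C"
    then have "?f t > 4*C" by simp
    have "C \<ge> 0" unfolding C_def by (rule add_nonneg_nonneg) (rule abs_ge_zero)+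
    have "u * ?f t \<ge> (1/4) * ?f t" using \<open>u \<ge> 1/4\<close> \<open>?f t > 4*C\<close> \<open>C \<ge> 0\<close>
      by (intro mult_right_mono) auto
    then show False using \<open>u * ?f t \<le> C\<close> \<open>?f t > 4*C\<close> by linarith
  qed
  moreover have "ereal (?f t) = K t" using kf_real[OF assms] t by simp
  ultimately have "ereal (4*C) < ereal (?f t)" using b(2)[OF t(1,2)] by simp
  then show False using \<open>?f t \<le> 4 * C\<close> by simp
qed

lemma kf_mone:
  assumes "kernel_function K"
  shows "K (-1) \<noteq> \<infinity>"
proof
  assume inf: "K (-1) = \<infinity>"
  let ?f = "\<lambda>t. real_of_ereal (K t)"
  define C where "C = \<bar>?f (-1/2)\<bar> + \<bar>?f (-1/4)\<bar>"
  have lim: "(K \<longlongrightarrow> \<infinity>) (at_right (-1))" using assms inf unfolding kernel_function_def by auto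
  have "eventually (\<lambda>t. ereal (4*C) < K t) (at_right (-1))"
    using order_tendstoD(1)[OF lim] by simp
  then obtain b where b: "b > -1" "\<And>y. y > -1 \<Longrightarrow> y < b \<Longrightarrow> ereal (4*C) < K y"
    unfolding eventually_at_right_field by blast
  define t where "t = (min b (-1/2) - 1)/2"
  have t: "t < b" "t > -1" "t < -1/2" using b unfolding t_def by auto
  have conc: "concave_on {-1<..<0} ?f" using assms unfolding kernel_function_def by auto
  define u where "u = (-1/2 - -1/4) / (t - -1/4)"
  have u: "0 \<le> u" "u \<le> 1" using t unfolding u_def by (auto simp: field_simps)
  have "?f (-1/2) \<ge> (1 - u) * ?f (-1/4) + u * ?f t"
    by (rule concave_bound_aux[OF conc _ _ _ u_def u]) (use t in auto)
  moreover have "u \<ge> 1/4" using t unfolding u_def by (auto simp: field_simps)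
  moreover have "(1 - u) * ?f (-1/4) \<ge> - \<bar>?f (-1/4)\<bar>"
    using aux_abs[OF u] by blast
  ultimately have "u * ?f t \<le> C" unfolding C_def by linarith
  have "?f t \<le> 4 * C"
  proof (rule ccontr)
    assume "\<not> ?f t \<le> 4 * C"
    then have "?f t > 4*C" by simp
    have "C \<ge> 0" unfolding C_def by (rule add_nonneg_nonneg) (rule abs_ge_zero)+
    have "u * ?f t \<ge> (1/4) * ?f t" using \<open>u \<ge> 1/4\<close> \<open>?f t > 4*C\<close> \<open>C \<ge> 0\<close>
      by (intro mult_right_mono) auto
    then show False using \<open>u * ?f t \<le> C\<close> \<open>?f t > 4*C\<close> by linarith
  qed
  moreover have "ereal (?f t) = K t" using kf_real[OF assms] t by simp
  ultimately have "ereal (4*C) < ereal (?f t)" using b(2)[OF t(2,1)] by simp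
  then show False using \<open>?f t \<le> 4 * C\<close> by simp
qed

lemma kf_zero:
  assumes "kernel_function K"
  shows "(K \<longlongrightarrow> K 0) (at 0)"
  using assms unfolding kernel_function_def by (intro filterlim_split_at) auto

lemma kf_cont:
  assumes "kernel_function K"
  shows "continuous_on {-1..1} K"
  unfolding continuous_on_def
proof
  fix x :: real assume x: "x \<in> {-1..1}"
  consider "x = -1" | "x = 1" | "x = 0" | "x \<in> {-1<..<0} \<union> {0<..<1}" using x by force
  then show "(K \<longlongrightarrow> K x) (at x within {-1..1})"
  proof cases
    case 1 then show ?thesis using assms unfolding kernel_function_def
      by (simp add: at_within_Icc_at_right)
  next
    case 2 then show ?thesis using assms unfolding kernel_function_def
      by (simp add: at_within_Icc_at_left)
  next
    case 3 then show ?thesis using kf_zero[OF assms] by (simp add: at_within_Icc_at)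
  next
    case 4 then have "(K \<longlongrightarrow> K x) (at x)" using kf_cont_open[OF assms] by blast
    then show ?thesis using tendsto_within_subset by blast
  qed
qed

lemma kf_ub:
  assumes "singular_kernel K"
  shows "\<exists>U\<ge>0. \<forall>s\<in>{-1..1}. K s \<le> ereal U"
proof -
  have kf: "kernel_function K" and K0: "K 0 = -\<infinity>" using assms unfolding singular_kernel_def by auto
  obtain s0 where s0: "s0 \<in> {-1..1}" "\<And>s. s \<in> {-1..1} \<Longrightarrow> K s \<le> K s0"
    using continuous_attains_sup[of "{-1..1::real}" K] kf_cont[OF kf] by auto
  have "K s0 \<noteq> \<infinity>"
  proof -
    consider "s0 = -1" | "s0 = 1" | "s0 = 0" | "s0 \<in> {-1<..<0} \<union> {0<..<1}" using s0(1) by force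
    then show ?thesis
    proof cases
      case 4 then show ?thesis using kf_fin[OF kf 4] by auto
    qed (use kf_one[OF kf] kf_mone[OF kf] K0 in auto)
  qed
  define U where "U = max 0 (real_of_ereal (K s0))"
  have "K s0 \<le> ereal U"
    using \<open>K s0 \<noteq> \<infinity>\<close> unfolding U_def by (cases "K s0") auto
  show ?thesis
  proof (intro exI[of _ U] conjI ballI)
    show "U \<ge> 0" unfolding U_def by simp
    fix s :: real assume "s \<in> {-1..1}"
    then show "K s \<le> ereal U" using s0(2) \<open>K s0 \<le> ereal U\<close> by (meson order_trans)
  qed
qed

lemma kf_delta:
  assumes "singular_kernel K"
  shows "\<exists>\<delta>>0. \<forall>s. \<bar>s\<bar> < \<delta> \<longrightarrow> K s < ereal C"
proof -
  have kf: "kernel_function K" and K0: "K 0 = -\<infinity>" using assms unfolding singular_kernel_def by auto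
  have "(K \<longlongrightarrow> -\<infinity>) (at 0)" using kf_zero[OF kf] K0 by simp
  then have "eventually (\<lambda>s. K s < ereal C) (at 0)"
    using order_tendstoD(2) by fastforce
  then obtain d where d: "d > 0" "\<And>s. s \<noteq> 0 \<Longrightarrow> dist s 0 < d \<Longrightarrow> K s < ereal C"
    unfolding eventually_at by auto
  show ?thesis
  proof (intro exI[of _ d] conjI allI impI)
    fix s :: real assume "\<bar>s\<bar> < d"
    then show "K s < ereal C" using d K0 by (cases "s = 0") auto
  qed (use d in auto)
qed

lemma kf_trunc_uc:
  assumes "singular_kernel K" "e > 0"
  shows "\<exists>d>0. \<forall>a\<in>{-1..1}. \<forall>b\<in>{-1..1}. \<bar>a - b\<bar> < d \<longrightarrow>
     \<bar>real_of_ereal (max (K a) (ereal (-B))) - real_of_ereal (max (K b) (ereal (-B)))\<bar> < e"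
proof -
  have kf: "kernel_function K" using assms unfolding singular_kernel_def by auto
  obtain U where U: "\<forall>s\<in>{-1..1}. K s \<le> ereal U" using kf_ub[OF assms(1)] by blast
  let ?h = "\<lambda>s. real_of_ereal (max (K s) (ereal (-B)))"
  have fin: "max (K s) (ereal (-B)) = ereal (?h s)" if "s \<in> {-1..1}" for s
  proof -
    have KU: "K s \<le> ereal U" using U that by blast
    have "max (K s) (ereal (-B)) \<le> max (ereal U) (ereal (-B))" using KU by (rule max.mono) simp
    also have "\<dots> = ereal (max U (-B))" by (simp add: max_def)
    finally have f1: "max (K s) (ereal (-B)) \<le> ereal (max U (-B))" .
    have f2: "ereal (-B) \<le> max (K s) (ereal (-B))" by simp
    have gen: "v = ereal (real_of_ereal v)" if "ereal a \<le> v" "v \<le> ereal b" for v :: ereal and a b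
      using that by (cases v) auto
    show ?thesis by (rule gen[OF f2 f1])
  qed
  have "continuous_on {-1..1} ?h"
    unfolding continuous_on_def
  proof
    fix x :: real assume x: "x \<in> {-1..1}"
    have "(K \<longlongrightarrow> K x) (at x within {-1..1})" using kf_cont[OF kf] x unfolding continuous_on_def by blast
    then have "((\<lambda>s. max (K s) (ereal (-B))) \<longlongrightarrow> max (K x) (ereal (-B))) (at x within {-1..1})"
      by (intro tendsto_max) auto
    then have "((\<lambda>s. max (K s) (ereal (-B))) \<longlongrightarrow> ereal (?h x)) (at x within {-1..1})"
      using fin[OF x] by simp
    then show "(?h \<longlongrightarrow> ?h x) (at x within {-1..1})" by (rule lim_real_of_ereal)
  qed
  then have "uniformly_continuous_on {-1..1} ?h" by (intro compact_uniformly_continuous) auto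
  then obtain d where "d > 0" "\<And>a b. a \<in> {-1..1} \<Longrightarrow> b \<in> {-1..1} \<Longrightarrow> dist a b < d \<Longrightarrow> dist (?h a) (?h b) < e"
    unfolding uniformly_continuous_on_def using assms(2) by metis
  then show ?thesis by (intro exI[of _ d]) (auto simp: dist_real_def)
qed

lemma Sbar_mono:
  assumes "y \<in> Sbar n" "a \<le> b" "b \<le> Suc n"
  shows "yext n y a \<le> yext n y b"
  using assms(2,3)
proof (induction b)
  case 0 then show ?case by simp
next
  case (Suc b)
  show ?case
  proof (cases "a = Suc b")
    case False
    then have "yext n y a \<le> yext n y b" using Suc by simp
    moreover have "yext n y b \<le> yext n y (Suc b)" using assms(1) Suc.prems unfolding Sbar_def by auto
    ultimately show ?thesis by simp
  qed simp
qed

lemma Sbar_range: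
  assumes "y \<in> Sbar n" "i \<in> {1..n}"
  shows "0 \<le> y i" "y i \<le> 1"
proof -
  have "yext n y 0 \<le> yext n y i" "yext n y i \<le> yext n y (Suc n)"
    using Sbar_mono[OF assms(1)] assms(2) by auto
  then show "0 \<le> y i" "y i \<le> 1" using assms(2) unfolding yext_def by (auto split: if_splits)
qed

lemma Iint_range:
  assumes "y \<in> Sbar n" "j \<le> n" "t \<in> Iint n y j"
  shows "0 \<le> t" "t \<le> 1"
proof -
  have "yext n y 0 \<le> yext n y j" "yext n y (Suc j) \<le> yext n y (Suc n)"
    using Sbar_mono[OF assms(1)] assms(2) by auto
  then show "0 \<le> t" "t \<le> 1" using assms(3) unfolding Iint_def yext_def by (auto split: if_splits)
qed



definition trunc :: "ereal \<Rightarrow> real \<Rightarrow> real" where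
  "trunc v B = real_of_ereal (max v (ereal (-B)))"

lemma trunc_fin: "v \<noteq> \<infinity> \<Longrightarrow> max v (ereal (-B)) = ereal (trunc v B)"
  by (cases v) (auto simp: trunc_def max_def)

lemma trunc_ge: "v \<noteq> \<infinity> \<Longrightarrow> v \<le> ereal (trunc v B)"
  using trunc_fin[of v B] by (metis max.cobounded1)

lemma trunc_eq:
  assumes "v > ereal (-B)" "v \<noteq> \<infinity>" shows "v = ereal (trunc v B)"
proof -
  have "max v (ereal (-B)) = v" by (rule max_absorb1) (use assms(1) in simp)
  then show ?thesis using trunc_fin[OF assms(2), of B] by simp
qed

lemma trunc_low: "v \<le> ereal (-B) \<Longrightarrow> trunc v B = -B"
  by (simp add: trunc_def max_def)

lemma trunc_gt: "v \<noteq> \<infinity> \<Longrightarrow> trunc v B > -B \<Longrightarrow> v > ereal (-B)"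
  using trunc_low[of v B] by (metis less_irrefl not_le)

lemma sum_le_trunc:
  "(\<forall>i\<in>I. f i \<noteq> \<infinity>) \<Longrightarrow> (\<Sum>i\<in>I. f i) \<le> ereal (\<Sum>i\<in>I. trunc (f i) B)"
proof -
  assume a: "\<forall>i\<in>I. f i \<noteq> \<infinity>"
  have "(\<Sum>i\<in>I. f i) \<le> (\<Sum>i\<in>I. ereal (trunc (f i) B))"
    by (intro sum_mono) (use a trunc_ge in auto)
  then show ?thesis by simp
qed

lemma sum_eq_trunc:
  "(\<forall>i\<in>I. f i > ereal (-B) \<and> f i \<noteq> \<infinity>) \<Longrightarrow> (\<Sum>i\<in>I. f i) = ereal (\<Sum>i\<in>I. trunc (f i) B)"
proof -
  assume a: "\<forall>i\<in>I. f i > ereal (-B) \<and> f i \<noteq> \<infinity>"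
  have "(\<Sum>i\<in>I. f i) = (\<Sum>i\<in>I. ereal (trunc (f i) B))"
    by (intro sum.cong refl) (use a trunc_eq in auto)
  then show ?thesis by simp
qed

lemma sum_ub:
  "\<forall>k\<in>I. f k \<le> ereal (U k) \<Longrightarrow> (\<Sum>k\<in>I. f k) \<le> ereal (\<Sum>k\<in>I. U k)"
proof -
  assume a: "\<forall>k\<in>I. f k \<le> ereal (U k)"
  have "(\<Sum>k\<in>I. f k) \<le> (\<Sum>k\<in>I. ereal (U k))" by (intro sum_mono) (use a in auto)
  then show ?thesis by simp
qed

lemma sum_one_bound:
  assumes "finite I" "i \<in> I" "\<forall>k\<in>I. f k \<le> ereal (U k)" "\<forall>k\<in>I. U k \<ge> 0"
  shows "(\<Sum>k\<in>I. f k) \<le> ereal (\<Sum>k\<in>I. U k) + f i"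
proof -
  have e1: "(\<Sum>k\<in>I. f k) = f i + (\<Sum>k\<in>I-{i}. f k)" using assms(1,2) by (simp add: sum.remove)
  have e2: "(\<Sum>k\<in>I-{i}. f k) \<le> ereal (\<Sum>k\<in>I-{i}. U k)" using assms(3) by (intro sum_ub) auto
  have e3: "(\<Sum>k\<in>I-{i}. U k) \<le> (\<Sum>k\<in>I. U k)"
    using assms by (intro sum_mono2) auto
  have "(\<Sum>k\<in>I-{i}. f k) \<le> ereal (\<Sum>k\<in>I. U k)" using e2 e3 by (meson ereal_less_eq(3) order_trans)
  then have "f i + (\<Sum>k\<in>I-{i}. f k) \<le> f i + ereal (\<Sum>k\<in>I. U k)" by (rule add_left_mono)
  then show ?thesis by (simp add: e1 add.commute)
qed

lemma finite_choose_pos: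
  assumes "finite I" "\<forall>i\<in>I. \<exists>d>0. \<forall>d'. 0 < d' \<and> d' \<le> d \<longrightarrow> P i d'"
  shows "\<exists>d>(0::real). \<forall>i\<in>I. P i d"
proof -
  have "\<exists>d>(0::real). \<forall>i\<in>I. \<forall>d'. 0 < d' \<and> d' \<le> d \<longrightarrow> P i d'"
    using assms
  proof (induction I rule: finite_induct)
    case empty then show ?case by (intro exI[of _ 1]) auto
  next
    case (insert x F)
    obtain d1 where d1: "d1 > 0" "\<forall>i\<in>F. \<forall>d'. 0 < d' \<and> d' \<le> d1 \<longrightarrow> P i d'" using insert by auto
    obtain d2 where d2: "d2 > 0" "\<forall>d'. 0 < d' \<and> d' \<le> d2 \<longrightarrow> P x d'" using insert.prems by auto
    show ?case using d1 d2 by (intro exI[of _ "min d1 d2"]) auto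
  qed
  then show ?thesis by (meson order_refl)
qed



theorem lemma3p4:
  fixes n :: nat and K :: "nat \<Rightarrow> real \<Rightarrow> ereal" and J :: "real \<Rightarrow> ereal"
    and j :: nat and q :: real and y :: "nat \<Rightarrow> real"
  assumes "\<forall>i\<in>{1..n}. singular_kernel (K i)"
    and "n_field_function n J"
    and "j \<le> n"
    and "q > 0"
    and "y \<in> Sbar n"
    and "mval n J K y j \<noteq> -\<infinity>"
  shows "\<exists>\<eta>>0. \<exists>Z. Z \<subseteq> Iint n y j \<and>
           (\<forall>x\<in>Sbar n. (\<forall>i\<in>{1..n}. \<bar>x i - y i\<bar> \<le> \<eta>) \<longrightarrow>
              Z \<subseteq> Iint n x j \<and>
              (\<forall>z\<in>Z. \<forall>i\<in>{1..n}. \<bar>z - x i\<bar> \<ge> \<eta>) \<and>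
              mval n J K x j = (SUP t\<in>Z. Fval n J K x t) \<and>
              (\<forall>t\<in>Z. Fval n J K x t \<ge> mval n J K x j - ereal q \<and>
                      mval n J K x j - ereal q > -\<infinity>))"
proof -
  note kern = assms(1)
  have jn: "j \<le> n" and qpos: "q > 0" and yS: "y \<in> Sbar n" using assms by auto
  obtain M where M0: "\<forall>t\<in>{0..1}. J t \<le> ereal M"
    using assms(2) unfolding n_field_function_def by blast
  have M: "\<And>t. t \<in> {0..1} \<Longrightarrow> J t \<le> ereal M" using M0 by blast
  have "\<forall>i\<in>{1..n}. \<exists>u. u \<ge> 0 \<and> (\<forall>s\<in>{-1..1}. K i s \<le> ereal u)"
  proof
    fix i assume i: "i \<in> {1..n}"
    have "singular_kernel (K i)" using kern i by (rule bspec)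
    then show "\<exists>u. u \<ge> 0 \<and> (\<forall>s\<in>{-1..1}. K i s \<le> ereal u)" by (rule kf_ub)
  qed
  from bchoice[OF this] obtain U where U: "\<forall>i\<in>{1..n}. U i \<ge> 0 \<and> (\<forall>s\<in>{-1..1}. K i s \<le> ereal (U i))"
    by (elim exE)
  define SU where "SU = (\<Sum>i=1..n. U i)"
  have U0: "\<forall>i\<in>{1..n}. U i \<ge> 0" using U by blast
  have SU0: "SU \<ge> 0" unfolding SU_def using U0 by (intro sum_nonneg) auto
  have arg: "t - x i \<in> {-1..1}" if "x \<in> Sbar n" "i \<in> {1..n}" "t \<in> {0..1}" for x t i
    using Sbar_range[OF that(1,2)] that(3) by auto
  have Kub: "K i (t - x i) \<le> ereal (U i)" if "x \<in> Sbar n" "i \<in> {1..n}" "t \<in> {0..1}" for x t i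
    using U arg[OF that] that(2) by blast
  have Kfin: "K i (t - x i) \<noteq> \<infinity>" if "x \<in> Sbar n" "i \<in> {1..n}" "t \<in> {0..1}" for x t i
    using Kub[OF that] by auto
  have Fdef: "Fval n J K x t = J t + (\<Sum>i=1..n. K i (t - x i))" for x t
    unfolding Fval_def by simp
  have one: "Fval n J K x t \<le> ereal (M + SU) + K i (t - x i)"
    if "x \<in> Sbar n" "i \<in> {1..n}" "t \<in> {0..1}" for x t i
  proof -
    have "(\<Sum>k=1..n. K k (t - x k)) \<le> ereal SU + K i (t - x i)"
      unfolding SU_def by (rule sum_one_bound) (use that Kub U0 in auto)
    then have "Fval n J K x t \<le> ereal M + (ereal SU + K i (t - x i))"
      unfolding Fdef using M[OF that(3)] by (rule add_mono[rotated])
    moreover have "ereal M + (ereal SU + K i (t - x i)) = ereal (M + SU) + K i (t - x i)"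
      by (simp only: add.assoc[symmetric] plus_ereal.simps(1))
    ultimately show ?thesis by simp
  qed
  have Fub: "Fval n J K x t \<le> ereal (M + SU)" if "x \<in> Sbar n" "t \<in> {0..1}" for x t
  proof -
    have "(\<Sum>k=1..n. K k (t - x k)) \<le> ereal SU"
      unfolding SU_def by (rule sum_ub) (use that Kub in auto)
    then have "Fval n J K x t \<le> ereal M + ereal SU"
      unfolding Fdef using M[OF that(2)] by (rule add_mono[rotated])
    then show ?thesis by simp
  qed
  have Iy01: "t \<in> {0..1}" if "x \<in> Sbar n" "t \<in> Iint n x j" for x t
    using Iint_range[OF that(1) jn that(2)] by auto
  have "mval n J K y j \<le> ereal (M + SU)"
    unfolding mval_def by (rule SUP_least) (use Fub[OF yS] Iy01[OF yS] in blast)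
  then obtain m where m: "mval n J K y j = ereal m"
    using assms(6) by (cases "mval n J K y j") auto
  define B where "B = M + SU - m + q + 2"
  define e where "e = min 1 (q / (8 * (real n + 1)))"
  have e0: "e > 0" and e1: "e \<le> 1" unfolding e_def using qpos by auto
  have "e \<le> q / (8 * (real n + 1))" unfolding e_def by simp
  then have "e * (8 * (real n + 1)) \<le> q" by (simp add: pos_le_divide_eq)
  then have ne: "real n * e \<le> q / 8" using e0 by (simp add: algebra_simps)
  have "\<exists>d>(0::real). \<forall>i\<in>{1..n}. (\<lambda>i d. \<forall>a\<in>{-1..1}. \<forall>b\<in>{-1..1}. \<bar>a - b\<bar> < d \<longrightarrow>
          \<bar>trunc (K i a) B - trunc (K i b) B\<bar> < e) i d"
  proof (rule finite_choose_pos)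
    show "\<forall>i\<in>{1..n}. \<exists>d>0. \<forall>d'. 0 < d' \<and> d' \<le> d \<longrightarrow> (\<lambda>i d. \<forall>a\<in>{-1..1}. \<forall>b\<in>{-1..1}. \<bar>a - b\<bar> < d \<longrightarrow>
          \<bar>trunc (K i a) B - trunc (K i b) B\<bar> < e) i d'"
    proof
      fix i assume "i \<in> {1..n}"
      then obtain d where "d > 0" "\<forall>a\<in>{-1..1}. \<forall>b\<in>{-1..1}. \<bar>a - b\<bar> < d \<longrightarrow>
          \<bar>trunc (K i a) B - trunc (K i b) B\<bar> < e"
        using kf_trunc_uc[of "K i" e B] kern e0 unfolding trunc_def by blast
      then show "\<exists>d>0. \<forall>d'. 0 < d' \<and> d' \<le> d \<longrightarrow> (\<lambda>i d. \<forall>a\<in>{-1..1}. \<forall>b\<in>{-1..1}. \<bar>a - b\<bar> < d \<longrightarrow>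
          \<bar>trunc (K i a) B - trunc (K i b) B\<bar> < e) i d'"
        by (intro exI[of _ d]) auto
    qed
  qed simp
  then obtain d where d0: "d > 0" and d: "\<And>i a b. i \<in> {1..n} \<Longrightarrow> a \<in> {-1..1} \<Longrightarrow> b \<in> {-1..1} \<Longrightarrow>
      \<bar>a - b\<bar> < d \<Longrightarrow> \<bar>trunc (K i a) B - trunc (K i b) B\<bar> < e"
    by auto
  have "\<exists>\<delta>>(0::real). \<forall>i\<in>{1..n}. (\<lambda>i \<delta>. \<forall>s. \<bar>s\<bar> < \<delta> \<longrightarrow> K i s < ereal (-B)) i \<delta>"
  proof (rule finite_choose_pos)
    show "\<forall>i\<in>{1..n}. \<exists>d>0. \<forall>d'. 0 < d' \<and> d' \<le> d \<longrightarrow> (\<lambda>i \<delta>. \<forall>s. \<bar>s\<bar> < \<delta> \<longrightarrow> K i s < ereal (-B)) i d'"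
    proof
      fix i assume "i \<in> {1..n}"
      then obtain \<delta> where "\<delta> > 0" "\<forall>s. \<bar>s\<bar> < \<delta> \<longrightarrow> K i s < ereal (-B)"
        using kf_delta[of "K i" "-B"] kern by blast
      then show "\<exists>d>0. \<forall>d'. 0 < d' \<and> d' \<le> d \<longrightarrow> (\<lambda>i \<delta>. \<forall>s. \<bar>s\<bar> < \<delta> \<longrightarrow> K i s < ereal (-B)) i d'"
        by (intro exI[of _ \<delta>]) auto
    qed
  qed simp
  then obtain \<delta> where \<delta>0: "\<delta> > 0" and \<delta>: "\<And>i s. i \<in> {1..n} \<Longrightarrow> \<bar>s\<bar> < \<delta> \<Longrightarrow> K i s < ereal (-B)"
    by auto
  define \<eta> where "\<eta> = min (d/2) \<delta>"
  have \<eta>0: "\<eta> > 0" and \<eta>d: "\<eta> < d" and \<eta>\<delta>: "\<eta> \<le> \<delta>" unfolding \<eta>_def using d0 \<delta>0 by auto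
  define near where "near x \<longleftrightarrow> x \<in> Sbar n \<and> (\<forall>i\<in>{1..n}. \<bar>x i - y i\<bar> \<le> \<eta>)" for x
  have near_y: "near y" unfolding near_def using yS \<eta>0 by simp
  define S where "S x t = (\<Sum>i=1..n. trunc (K i (t - x i)) B)" for x t
  have est1: "\<bar>trunc (K i (t - x i)) B - trunc (K i (t - y i)) B\<bar> < e"
    if "near x" "t \<in> {0..1}" "i \<in> {1..n}" for x t i
  proof (rule d[OF that(3)])
    show "t - x i \<in> {-1..1}" using arg that unfolding near_def by blast
    show "t - y i \<in> {-1..1}" using arg yS that by blast
    show "\<bar>(t - x i) - (t - y i)\<bar> < d" using that \<eta>d unfolding near_def by force
  qed
  have est: "\<bar>S x t - S y t\<bar> \<le> q / 8" if "near x" "t \<in> {0..1}" for x t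
  proof -
    have "\<bar>S x t - S y t\<bar> = \<bar>\<Sum>i=1..n. trunc (K i (t - x i)) B - trunc (K i (t - y i)) B\<bar>"
      unfolding S_def by (simp add: sum_subtractf)
    also have "\<dots> \<le> (\<Sum>i=1..n. \<bar>trunc (K i (t - x i)) B - trunc (K i (t - y i)) B\<bar>)"
      by (rule sum_abs)
    also have "\<dots> \<le> (\<Sum>i=1..n. e)"
      by (intro sum_mono less_imp_le est1 that) auto
    also have "\<dots> = real n * e" by simp
    finally show ?thesis using ne by linarith
  qed
  have SleS: "(\<Sum>i=1..n. K i (t - x i)) \<le> ereal (S x t)" if "x \<in> Sbar n" "t \<in> {0..1}" for x t
    unfolding S_def by (rule sum_le_trunc) (use Kfin that in blast)
  have SeqS: "(\<Sum>i=1..n. K i (t - x i)) = ereal (S x t)"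
    if "x \<in> Sbar n" "t \<in> {0..1}" "\<forall>i\<in>{1..n}. K i (t - x i) > ereal (-B)" for x t
    unfolding S_def by (rule sum_eq_trunc) (use Kfin that in blast)
  define Z where "Z = {t \<in> Iint n y j. Fval n J K y t \<ge> ereal (m - q/2)}"
  have Z01: "t \<in> {0..1}" if "t \<in> Z" for t using that Iy01[OF yS] unfolding Z_def by blast
  have Zy: "K i (t - y i) > ereal (-B + 1)" if "t \<in> Z" "i \<in> {1..n}" for t i
  proof (rule ccontr)
    assume "\<not> ?thesis"
    then have "K i (t - y i) \<le> ereal (-B + 1)" by simp
    then have "Fval n J K y t \<le> ereal (M + SU) + ereal (-B + 1)"
      using one[OF yS that(2) Z01[OF that(1)]] by (meson add_left_mono order_trans)
    also have "\<dots> < ereal (m - q/2)" unfolding B_def using qpos by simp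
    finally show False using that(1) unfolding Z_def by auto
  qed
  have Zx: "K i (t - x i) > ereal (-B)" if "t \<in> Z" "i \<in> {1..n}" "near x" for t i x
  proof -
    have xS: "x \<in> Sbar n" using that(3) unfolding near_def by blast
    have Kgt: "K i (t - y i) > ereal (-B + 1)" using Zy[OF that(1,2)] .
    have "K i (t - y i) > ereal (-B)" by (rule order.strict_trans[OF _ Kgt]) simp
    then have eq: "K i (t - y i) = ereal (trunc (K i (t - y i)) B)"
      by (rule trunc_eq) (rule Kfin[OF yS that(2) Z01[OF that(1)]])
    have "ereal (-B + 1) < ereal (trunc (K i (t - y i)) B)" unfolding eq[symmetric] by (rule Kgt)
    then have "trunc (K i (t - y i)) B > -B + 1" by simp
    then have "trunc (K i (t - x i)) B > -B"
      using est1[OF that(3) Z01[OF that(1)] that(2)] e1 unfolding abs_less_iff by linarith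
    then show ?thesis using trunc_gt Kfin[OF xS that(2) Z01[OF that(1)]] by blast
  qed
  have Zdist: "\<bar>t - x i\<bar> \<ge> \<delta>" if "t \<in> Z" "i \<in> {1..n}" "near x" for t i x
    using \<delta>[OF that(2), of "t - x i"] Zx[OF that] by (meson not_le order.asym)
  have ZJ: "\<exists>r. J t = ereal r" if "t \<in> Z" for t
  proof -
    have gt: "\<forall>i\<in>{1..n}. K i (t - y i) > ereal (-B)"
    proof
      fix i assume i: "i \<in> {1..n}"
      show "K i (t - y i) > ereal (-B)" by (rule order.strict_trans[OF _ Zy[OF that i]]) simp
    qed
    have sy: "(\<Sum>i=1..n. K i (t - y i)) = ereal (S y t)"
      by (rule SeqS[OF yS Z01[OF that] gt])
    have "J t \<noteq> -\<infinity>"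
    proof
      assume "J t = -\<infinity>"
      then have "Fval n J K y t = -\<infinity>" unfolding Fdef sy by simp
      then show False using that unfolding Z_def by auto
    qed
    moreover have "J t \<noteq> \<infinity>" using M[OF Z01[OF that]] by auto
    ultimately show ?thesis by (cases "J t") auto
  qed
  have ZF: "\<exists>r. J t = ereal r \<and> Fval n J K x t = ereal (r + S x t)"
    if tZ: "t \<in> Z" and nx: "near x" for t x
  proof -
    have xS: "x \<in> Sbar n" using that(2) unfolding near_def by blast
    obtain r where r: "J t = ereal r" using ZJ[OF tZ] by blast
    have "(\<Sum>i=1..n. K i (t - x i)) = ereal (S x t)"
      by (rule SeqS[OF xS Z01[OF that(1)]]) (use Zx[OF that(1) _ that(2)] in auto)
    then show ?thesis using r unfolding Fdef by auto
  qed
  have "ereal (m - q/8) < (SUP t\<in>Iint n y j. Fval n J K y t)"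
    using m qpos unfolding mval_def by simp
  then obtain t0 where t0I: "t0 \<in> Iint n y j" and t0v: "ereal (m - q/8) < Fval n J K y t0"
    unfolding less_SUP_iff by blast
  have t0Z: "t0 \<in> Z" unfolding Z_def using t0I t0v qpos
    by (auto intro: order.trans[OF _ less_imp_le[OF t0v]])
  have Fy_le: "Fval n J K y t \<le> ereal m" if "t \<in> Iint n y j" for t
    using that m unfolding mval_def by (metis SUP_upper)
  have Zbounds: "ereal (m - q/2 - q/8) \<le> Fval n J K x t \<and> Fval n J K x t \<le> ereal (m + q/8)"
    if tZ: "t \<in> Z" and nx: "near x" for t x
  proof -
    obtain r where r: "J t = ereal r" "Fval n J K x t = ereal (r + S x t)" using ZF[OF tZ nx] by blast
    obtain r' where r': "J t = ereal r'" "Fval n J K y t = ereal (r' + S y t)" using ZF[OF tZ near_y] by blast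
    have "r' = r" using r r' by simp
    have "r + S y t \<le> m" using Fy_le[of t] tZ r' \<open>r' = r\<close> unfolding Z_def by auto
    moreover have "r + S y t \<ge> m - q/2" using tZ r' \<open>r' = r\<close> unfolding Z_def by auto
    moreover have "\<bar>S x t - S y t\<bar> \<le> q/8" using est[OF nx Z01[OF tZ]] .
    ultimately have "m - q/2 - q/8 \<le> r + S x t" "r + S x t \<le> m + q/8" unfolding abs_le_iff by linarith+
    then show ?thesis using r(2) by simp
  qed
  have t0x: "ereal (m - q/4) \<le> Fval n J K x t0" if nx: "near x" for x
  proof -
    obtain r where r: "J t0 = ereal r" "Fval n J K x t0 = ereal (r + S x t0)" using ZF[OF t0Z nx] by blast
    obtain r' where r': "J t0 = ereal r'" "Fval n J K y t0 = ereal (r' + S y t0)" using ZF[OF t0Z near_y] by blast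
    have "r' = r" using r r' by simp
    have "r + S y t0 > m - q/8" using t0v r' \<open>r' = r\<close> by auto
    moreover have "\<bar>S x t0 - S y t0\<bar> \<le> q/8" using est[OF nx Z01[OF t0Z]] .
    ultimately have "m - q/4 \<le> r + S x t0" unfolding abs_le_iff by linarith
    then show ?thesis using r(2) by simp
  qed
  have rest: "Fval n J K x t \<le> ereal (m - q/4)"
    if "near x" "t \<in> Iint n x j" "t \<notin> Z" for x t
  proof -
    have xS: "x \<in> Sbar n" using that(1) unfolding near_def by blast
    have t01: "t \<in> {0..1}" using Iy01[OF xS that(2)] .
    have small: "Fval n J K x t \<le> ereal (m - q/4)" if "i \<in> {1..n}" "K i (t - x i) \<le> ereal (-B + 1)" for i
    proof -
      have "Fval n J K x t \<le> ereal (M + SU) + ereal (-B + 1)"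
        using one[OF xS that(1) t01] that(2) by (meson add_left_mono order_trans)
      also have "\<dots> \<le> ereal (m - q/4)" unfolding B_def using qpos by simp
      finally show ?thesis .
    qed
    show ?thesis
    proof (cases "t \<in> Iint n y j")
      case False
      have tx: "yext n x j \<le> t" "t \<le> yext n x (Suc j)" using that(2) unfolding Iint_def by auto
      consider "t < yext n y j" | "t > yext n y (Suc j)" using False unfolding Iint_def by force
      then show ?thesis
      proof cases
        case 1
        have "j \<noteq> 0" using 1 t01 by (auto simp: yext_def split: if_splits)
        then have jI: "j \<in> {1..n}" using jn by auto
        have "yext n y j = y j" "yext n x j = x j" using jI unfolding yext_def by auto
        then have "\<bar>t - x j\<bar> < \<delta>" using 1 tx that(1) jI \<eta>\<delta> unfolding near_def by force
        then have "K j (t - x j) < ereal (-B)" using \<delta>[OF jI] by blast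
        then have "K j (t - x j) \<le> ereal (-B + 1)" by (rule order.trans[OF less_imp_le]) simp
        then show ?thesis by (rule small[OF jI])
      next
        case 2
        have "Suc j \<noteq> Suc n" using 2 t01 by (auto simp: yext_def split: if_splits)
        then have jI: "Suc j \<in> {1..n}" using jn by auto
        have "yext n y (Suc j) = y (Suc j)" "yext n x (Suc j) = x (Suc j)" using jI unfolding yext_def by auto
        then have "\<bar>t - x (Suc j)\<bar> < \<delta>" using 2 tx that(1) jI \<eta>\<delta> unfolding near_def by force
        then have "K (Suc j) (t - x (Suc j)) < ereal (-B)" using \<delta>[OF jI] by blast
        then have "K (Suc j) (t - x (Suc j)) \<le> ereal (-B + 1)" by (rule order.trans[OF less_imp_le]) simp
        then show ?thesis by (rule small[OF jI])
      qed
    next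
      case True
      then have Fy: "Fval n J K y t < ereal (m - q/2)" using that(3) unfolding Z_def by auto
      show ?thesis
      proof (cases "\<exists>i\<in>{1..n}. K i (t - y i) \<le> ereal (-B)")
        case True
        then obtain i where i: "i \<in> {1..n}" "K i (t - y i) \<le> ereal (-B)" by blast
        have "trunc (K i (t - y i)) B = -B" using trunc_low[OF i(2)] .
        then have "trunc (K i (t - x i)) B < -B + 1" using est1[OF that(1) t01 i(1)] e1 unfolding abs_less_iff by linarith
        then have "K i (t - x i) \<le> ereal (-B + 1)"
          using trunc_ge[OF Kfin[OF xS i(1) t01], of B] \<open>trunc (K i (t - x i)) B < -B + 1\<close>
          by (meson ereal_less_eq(3) less_imp_le order_trans)
        then show ?thesis using small[OF i(1)] by blast
      next
        case False
        then have sy: "(\<Sum>i=1..n. K i (t - y i)) = ereal (S y t)"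
          using SeqS[OF yS t01] by (meson not_le)
        have sx: "(\<Sum>i=1..n. K i (t - x i)) \<le> ereal (S x t)" using SleS[OF xS t01] .
        have es: "S x t \<le> S y t + q/8" using est[OF that(1) t01] unfolding abs_le_iff by linarith
        show ?thesis
        proof (cases "J t")
          case (real r)
          have "r + S y t < m - q/2" using Fy unfolding Fdef sy real by simp
          have "Fval n J K x t \<le> ereal r + ereal (S x t)" unfolding Fdef real using sx by (rule add_left_mono)
          also have "\<dots> \<le> ereal (m - q/4)" using \<open>r + S y t < m - q/2\<close> es qpos by simp
          finally show ?thesis .
        next
          case PInf then show ?thesis using M[OF t01] by simp
        next
          case MInf
          have "Fval n J K x t = -\<infinity>" unfolding Fdef MInf
            using sx by (cases "(\<Sum>i=1..n. K i (t - x i))") auto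
          then show ?thesis by simp
        qed
      qed
    qed
  qed
  have Zsub: "Z \<subseteq> Iint n y j" unfolding Z_def by auto
  show ?thesis
  proof (intro exI[of _ \<eta>] conjI[OF \<eta>0] exI[of _ Z] conjI[OF Zsub] ballI impI)
    fix x assume xS: "x \<in> Sbar n" and xn: "\<forall>i\<in>{1..n}. \<bar>x i - y i\<bar> \<le> \<eta>"
    have nx: "near x" unfolding near_def using xS xn by blast
    have ZI: "Z \<subseteq> Iint n x j"
    proof
      fix t assume tZ: "t \<in> Z"
      have ty: "yext n y j \<le> t" "t \<le> yext n y (Suc j)" using tZ unfolding Z_def Iint_def by auto
      have t01: "t \<in> {0..1}" using Z01[OF tZ] .
      have "yext n x j \<le> t"
      proof (cases "j = 0")
        case True then show ?thesis using t01 unfolding yext_def by auto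
      next
        case False
        then have jI: "j \<in> {1..n}" using jn by auto
        have "\<bar>t - y j\<bar> \<ge> \<delta>" using Zdist[OF tZ jI near_y] .
        moreover have "y j \<le> t" using ty jI unfolding yext_def by auto
        moreover have "\<bar>x j - y j\<bar> \<le> \<eta>" using xn jI by blast
        ultimately show ?thesis using jI \<eta>\<delta> unfolding yext_def by auto
      qed
      moreover have "t \<le> yext n x (Suc j)"
      proof (cases "j = n")
        case True then show ?thesis using t01 unfolding yext_def by auto
      next
        case False
        then have jI: "Suc j \<in> {1..n}" using jn by auto
        have "\<bar>t - y (Suc j)\<bar> \<ge> \<delta>" using Zdist[OF tZ jI near_y] .
        moreover have "t \<le> y (Suc j)" using ty jI unfolding yext_def by auto
        moreover have "\<bar>x (Suc j) - y (Suc j)\<bar> \<le> \<eta>" using xn jI by blast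
        ultimately show ?thesis using jI \<eta>\<delta> unfolding yext_def by auto
      qed
      ultimately show "t \<in> Iint n x j" unfolding Iint_def by auto
    qed
    have dist: "\<forall>z\<in>Z. \<forall>i\<in>{1..n}. \<bar>z - x i\<bar> \<ge> \<eta>"
      using Zdist[OF _ _ nx] \<eta>\<delta> by (meson order_trans)
    have SUPZ_ge: "ereal (m - q/4) \<le> (SUP t\<in>Z. Fval n J K x t)"
      using t0x[OF nx] t0Z by (meson SUP_upper order_trans)
    have meq: "mval n J K x j = (SUP t\<in>Z. Fval n J K x t)"
    proof (rule antisym)
      show "mval n J K x j \<le> (SUP t\<in>Z. Fval n J K x t)"
        unfolding mval_def
      proof (rule SUP_least)
        fix t assume tI: "t \<in> Iint n x j"
        show "Fval n J K x t \<le> (SUP t\<in>Z. Fval n J K x t)"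
        proof (cases "t \<in> Z")
          case True then show ?thesis by (rule SUP_upper)
        next
          case False then show ?thesis using rest[OF nx tI] SUPZ_ge by (meson order_trans)
        qed
      qed
      show "(SUP t\<in>Z. Fval n J K x t) \<le> mval n J K x j"
        unfolding mval_def by (rule SUP_subset_mono[OF ZI]) simp
    qed
    have mx_le: "mval n J K x j \<le> ereal (m + q/8)"
      unfolding meq by (rule SUP_least) (use Zbounds[OF _ nx] in blast)
    have mx_ge: "ereal (m - q/4) \<le> mval n J K x j" using SUPZ_ge meq by simp
    obtain mx where mx: "mval n J K x j = ereal mx" "m - q/4 \<le> mx" "mx \<le> m + q/8"
      using mx_le mx_ge by (cases "mval n J K x j") auto
    have last: "\<forall>t\<in>Z. Fval n J K x t \<ge> mval n J K x j - ereal q \<and> mval n J K x j - ereal q > -\<infinity>"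
    proof
      fix t assume tZ: "t \<in> Z"
      have "ereal (mx - q) \<le> ereal (m - q/2 - q/8)" using mx(3) qpos by simp
      also have "\<dots> \<le> Fval n J K x t" using Zbounds[OF tZ nx] by blast
      finally show "Fval n J K x t \<ge> mval n J K x j - ereal q \<and> mval n J K x j - ereal q > -\<infinity>"
        using mx(1) by simp
    qed
    show "Z \<subseteq> Iint n x j \<and>
              (\<forall>z\<in>Z. \<forall>i\<in>{1..n}. \<bar>z - x i\<bar> \<ge> \<eta>) \<and>
              mval n J K x j = (SUP t\<in>Z. Fval n J K x t) \<and>
              (\<forall>t\<in>Z. Fval n J K x t \<ge> mval n J K x j - ereal q \<and>
                      mval n J K x j - ereal q > -\<infinity>)"
      using ZI dist meq last by blast
  qed
qed


end
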